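(* For each $\{\cup,\cap,\bot,\{0\},\min,\max,l,r\}$-formula $\phi(\bar{X})$ there is a $\{\cup,\cap,\bot,\{0\},\min,\max,\mathrm{ips}\}$-formula $\psi(\bar{Y})$ such that for each tuple $\bar{A}$ of finite unions of closed intervals of $I$, \[ L(I) \models \phi(\bar{A}) \Longleftrightarrow W(I) \models \psi(\overline{l(A)},\overline{r(A)}), \] where $l(A)$ and $r(A)$ denote the sets of left and right endpoints of $A$.
   Context: Let $I$ be a dense linear order with a left endpoint $0$ and no right endpoint. $W(I)$ is the structure in the signature $\{\cup,\cap,\bot,\{0\},\min,\max,\mathrm{ips}\}$ whose universe is the collection of finite subsets of $I$, with $\cup,\cap$ union and intersection, $\bot$ the empty set, the constant $\{0\}$ interpreted as the singleton of the left endpoint, $\min$ and $\max$ sending a nonempty finite set to the singleton of its minimum (resp. maximum) and fixing $\emptyset$, and $\mathrm{ips}$ the binary function $\mathrm{ips}(A,B)=\{i\in A : \text{the successor of } i \text{ in } A \text{ (in the induced order) exists and lies in } B\}$. $L(I)$ is the structure in the signature $\{\cup,\cap,\bot,\{0\},\min,\max,l,r\}$ whose universe is the collection of finite unions of closed intervals of $I$ (closed intervals being sets of the form $[i,j]$, $[i,+\infty)$, $(-\infty,j]$), with $\cup,\cap$ union and intersection, $\bot$ the empty set, $\{0\}$ the singleton of the left endpoint, $\min$ and $\max$ sending a set to the singleton of its minimum (resp. maximum), with $\min(\emptyset)=\max(\emptyset)=\emptyset$ and $\max(A)=\emptyset$ for unbounded $A$, and $l$, $r$ sending a set to the set of its left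 (resp. right) endpoints. *)

theory Defs
  imports Main
begin

text \<open>The order I is modelled by a type 'a of class
  dense_linorder + order_bot + no_top: a dense linear order with left endpoint
  bot (the element 0) and no right endpoint.\<close>

definition closed_interval :: "'a::linorder set \<Rightarrow> bool" where
  "closed_interval S \<longleftrightarrow>
     (\<exists>i j. i \<le> j \<and> S = {i..j}) \<or> (\<exists>i. S = {i..}) \<or> (\<exists>j. S = {..j})"

definition Lset :: "'a::linorder set set" where
  "Lset = {A. \<exists>F. finite F \<and> (\<forall>S\<in>F. closed_interval S) \<and> A = \<Union>F}"

definition Wset :: "'a set set" where
  "Wset = {A. finite A}"

definition min_set :: "'a::linorder set \<Rightarrow> 'a set" where
  "min_set A = (if \<exists>m\<in>A. \<forall>x\<in>A. m \<le> x then {LEAST x. x \<in> A} else {})"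

definition max_set :: "'a::linorder set \<Rightarrow> 'a set" where
  "max_set A = (if \<exists>m\<in>A. \<forall>x\<in>A. x \<le> m then {GREATEST x. x \<in> A} else {})"

definition lend :: "'a::linorder set \<Rightarrow> 'a set" where
  "lend A = {x \<in> A. \<not> (\<exists>y<x. {y..x} \<subseteq> A)}"

definition rend :: "'a::linorder set \<Rightarrow> 'a set" where
  "rend A = {x \<in> A. \<not> (\<exists>y>x. {x..y} \<subseteq> A)}"

definition ips :: "'a::linorder set \<Rightarrow> 'a set \<Rightarrow> 'a set" where
  "ips A B = {i \<in> A. \<exists>j\<in>A. i < j \<and> (\<forall>k\<in>A. i < k \<longrightarrow> j \<le> k) \<and> j \<in> B}"

datatype ltm = LVar nat | LUn ltm ltm | LInt ltm ltm | LBot | LZero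
  | LMin ltm | LMax ltm | LL ltm | LR ltm

datatype wtm = WVar nat | WUn wtm wtm | WInt wtm wtm | WBot | WZero
  | WMin wtm | WMax wtm | WIps wtm wtm

datatype 'tm fm = Eq 'tm 'tm | Neg "'tm fm" | Conj "'tm fm" "'tm fm"
  | Disj "'tm fm" "'tm fm" | Ex nat "'tm fm" | All nat "'tm fm"

fun Leval :: "(nat \<Rightarrow> 'a::{linorder,order_bot} set) \<Rightarrow> ltm \<Rightarrow> 'a set" where
  "Leval \<sigma> (LVar n) = \<sigma> n"
| "Leval \<sigma> (LUn s t) = Leval \<sigma> s \<union> Leval \<sigma> t"
| "Leval \<sigma> (LInt s t) = Leval \<sigma> s \<inter> Leval \<sigma> t"
| "Leval \<sigma> LBot = {}"
| "Leval \<sigma> LZero = {bot}"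
| "Leval \<sigma> (LMin t) = min_set (Leval \<sigma> t)"
| "Leval \<sigma> (LMax t) = max_set (Leval \<sigma> t)"
| "Leval \<sigma> (LL t) = lend (Leval \<sigma> t)"
| "Leval \<sigma> (LR t) = rend (Leval \<sigma> t)"

fun Weval :: "(nat \<Rightarrow> 'a::{linorder,order_bot} set) \<Rightarrow> wtm \<Rightarrow> 'a set" where
  "Weval \<sigma> (WVar n) = \<sigma> n"
| "Weval \<sigma> (WUn s t) = Weval \<sigma> s \<union> Weval \<sigma> t"
| "Weval \<sigma> (WInt s t) = Weval \<sigma> s \<inter> Weval \<sigma> t"
| "Weval \<sigma> WBot = {}"
| "Weval \<sigma> WZero = {bot}"
| "Weval \<sigma> (WMin t) = min_set (Weval \<sigma> t)"
| "Weval \<sigma> (WMax t) = max_set (Weval \<sigma> t)"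
| "Weval \<sigma> (WIps s t) = ips (Weval \<sigma> s) (Weval \<sigma> t)"

fun Lsat :: "(nat \<Rightarrow> 'a::{linorder,order_bot} set) \<Rightarrow> ltm fm \<Rightarrow> bool" where
  "Lsat \<sigma> (Eq s t) \<longleftrightarrow> Leval \<sigma> s = Leval \<sigma> t"
| "Lsat \<sigma> (Neg \<phi>) \<longleftrightarrow> \<not> Lsat \<sigma> \<phi>"
| "Lsat \<sigma> (Conj \<phi> \<psi>) \<longleftrightarrow> Lsat \<sigma> \<phi> \<and> Lsat \<sigma> \<psi>"
| "Lsat \<sigma> (Disj \<phi> \<psi>) \<longleftrightarrow> Lsat \<sigma> \<phi> \<or> Lsat \<sigma> \<psi>"
| "Lsat \<sigma> (Ex x \<phi>) \<longleftrightarrow> (\<exists>A\<in>Lset. Lsat (\<sigma>(x := A)) \<phi>)"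
| "Lsat \<sigma> (All x \<phi>) \<longleftrightarrow> (\<forall>A\<in>Lset. Lsat (\<sigma>(x := A)) \<phi>)"

fun Wsat :: "(nat \<Rightarrow> 'a::{linorder,order_bot} set) \<Rightarrow> wtm fm \<Rightarrow> bool" where
  "Wsat \<sigma> (Eq s t) \<longleftrightarrow> Weval \<sigma> s = Weval \<sigma> t"
| "Wsat \<sigma> (Neg \<phi>) \<longleftrightarrow> \<not> Wsat \<sigma> \<phi>"
| "Wsat \<sigma> (Conj \<phi> \<psi>) \<longleftrightarrow> Wsat \<sigma> \<phi> \<and> Wsat \<sigma> \<psi>"
| "Wsat \<sigma> (Disj \<phi> \<psi>) \<longleftrightarrow> Wsat \<sigma> \<phi> \<or> Wsat \<sigma> \<psi>"
| "Wsat \<sigma> (Ex x \<phi>) \<longleftrightarrow> (\<exists>A\<in>Wset. Wsat (\<sigma>(x := A)) \<phi>)"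
| "Wsat \<sigma> (All x \<phi>) \<longleftrightarrow> (\<forall>A\<in>Wset. Wsat (\<sigma>(x := A)) \<phi>)"

definition endpoint_asg :: "(nat \<Rightarrow> 'a::linorder set) \<Rightarrow> nat \<Rightarrow> 'a set" where
  "endpoint_asg \<sigma> k = (if even k then lend (\<sigma> (k div 2)) else rend (\<sigma> (k div 2)))"

end

theory Submission
  imports Defs
begin


definition dec :: "'a::linorder set \<Rightarrow> 'a set \<Rightarrow> 'a set" where
  "dec L R = {x. \<exists>l\<in>L. l \<le> x \<and> \<not> (\<exists>r\<in>R. l \<le> r \<and> r < x)}"

definition U :: "('a::linorder \<times> 'a) set \<Rightarrow> 'a set \<Rightarrow> 'a set" where
  "U P Q = (\<Union>p\<in>P. {fst p..snd p}) \<union> (\<Union>i\<in>Q. {i..})"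

lemma U_mem_P: "p \<in> P \<Longrightarrow> fst p \<le> w \<Longrightarrow> w \<le> snd p \<Longrightarrow> w \<in> U P Q"
  unfolding U_def by auto

lemma U_sub_P: "p \<in> P \<Longrightarrow> fst p \<le> u \<Longrightarrow> v \<le> snd p \<Longrightarrow> {u..v} \<subseteq> U P Q"
  using U_mem_P[of p P _ Q] by auto

lemma U_mem_Q: "i \<in> Q \<Longrightarrow> i \<le> w \<Longrightarrow> w \<in> U P Q"
  unfolding U_def by auto

lemma U_sub_Q: "i \<in> Q \<Longrightarrow> i \<le> u \<Longrightarrow> {u..v} \<subseteq> U P Q"
  using U_mem_Q[of i Q _ P] by auto

lemma atMost_bot: "{..(j::'a::{linorder,order_bot})} = {bot..j}"
  by auto

lemma Lset_rep:
  assumes "(A::'a::{linorder,order_bot} set) \<in> Lset"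
  shows "\<exists>P Q. finite P \<and> finite Q \<and> A = U P Q"
proof -
  obtain F where F: "finite F" "\<forall>S\<in>F. closed_interval S" "A = \<Union>F"
    using assms unfolding Lset_def by blast
  have "(\<forall>S\<in>F. closed_interval S) \<longrightarrow> (\<exists>P Q. finite P \<and> finite Q \<and> \<Union>F = U P Q)"
    using F(1)
  proof (induction F rule: finite_induct)
    case empty
    show ?case by (rule impI, rule exI[of _ "{}"], rule exI[of _ "{}"]) (simp add: U_def)
  next
    case (insert S F)
    show ?case
    proof
      assume h: "\<forall>S\<in>insert S F. closed_interval S"
      then obtain P Q where PQ: "finite P" "finite Q" "\<Union>F = U P Q" using insert by auto
      have "closed_interval S" using h by auto
      then consider (a) i j where "S = {i..j}" | (b) i where "S = {i..}" | (c) j where "S = {..j}"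
        unfolding closed_interval_def by blast
      then show "\<exists>P Q. finite P \<and> finite Q \<and> \<Union>(insert S F) = U P Q"
      proof cases
        case a
        then show ?thesis using PQ
          by (intro exI[of _ "insert (i,j) P"] exI[of _ Q]) (auto simp: U_def)
      next
        case b
        then show ?thesis using PQ
          by (intro exI[of _ P] exI[of _ "insert i Q"]) (auto simp: U_def)
      next
        case c
        then show ?thesis using PQ
          by (intro exI[of _ "insert (bot,j) P"] exI[of _ Q]) (auto simp: U_def atMost_bot)
      qed
    qed
  qed
  then show ?thesis using F by blast
qed

lemma lend_sub:
  assumes "A = U P Q"
  shows "lend A \<subseteq> fst ` P \<union> Q"
proof
  fix x assume x: "x \<in> lend A"
  then have xA: "x \<in> A" and nx: "\<not> (\<exists>y<x. {y..x} \<subseteq> A)" unfolding lend_def by auto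
  from xA assms consider (a) p where "p \<in> P" "x \<in> {fst p..snd p}" | (b) i where "i \<in> Q" "x \<in> {i..}"
    unfolding U_def by blast
  then show "x \<in> fst ` P \<union> Q"
  proof cases
    case a
    have "\<not> fst p < x"
    proof
      assume "fst p < x"
      moreover have "{fst p..x} \<subseteq> A" using a assms U_sub_P[of p P "fst p" x Q] by auto
      ultimately show False using nx by blast
    qed
    then have "fst p = x" using a by auto
    then show ?thesis using a by auto
  next
    case b
    have "\<not> i < x"
    proof
      assume "i < x"
      moreover have "{i..x} \<subseteq> A" using b assms U_sub_Q[of i Q i x P] by auto
      ultimately show False using nx by blast
    qed
    then have "i = x" using b by auto
    then show ?thesis using b by auto
  qed
qed

lemma rend_sub:
  fixes A :: "'a::{linorder,no_top} set"
  assumes "A = U P Q"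
  shows "rend A \<subseteq> snd ` P"
proof
  fix x assume x: "x \<in> rend A"
  then have xA: "x \<in> A" and nx: "\<not> (\<exists>y>x. {x..y} \<subseteq> A)" unfolding rend_def by auto
  from xA assms consider (a) p where "p \<in> P" "x \<in> {fst p..snd p}" | (b) i where "i \<in> Q" "x \<in> {i..}"
    unfolding U_def by blast
  then show "x \<in> snd ` P"
  proof cases
    case a
    have "\<not> x < snd p"
    proof
      assume "x < snd p"
      moreover have "{x..snd p} \<subseteq> A" using a assms U_sub_P[of p P x "snd p" Q] by auto
      ultimately show False using nx by blast
    qed
    then have "snd p = x" using a by auto
    then show ?thesis using a by auto
  next
    case b
    obtain y where "x < y" using gt_ex by blast
    moreover have "{x..y} \<subseteq> A" using b assms U_sub_Q[of i Q x y P] by auto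
    ultimately show ?thesis using nx by blast
  qed
qed

lemma lemG:
  fixes A :: "'a::dense_linorder set"
  assumes AU: "A = U P Q" and fin: "finite P" "finite Q"
    and aA: "a \<in> A" and ab: "a \<le> b" and bA: "b \<notin> A"
  shows "\<exists>r\<in>rend A. a \<le> r \<and> r < b"
proof -
  define T where "T = {j \<in> snd ` P. a \<le> j \<and> j < b \<and> {a..j} \<subseteq> A}"
  have finT: "finite T" unfolding T_def using fin by auto
  have "T \<noteq> {}"
  proof -
    from aA AU consider (a) p where "p \<in> P" "a \<in> {fst p..snd p}" | (b) i where "i \<in> Q" "a \<in> {i..}"
      unfolding U_def by blast
    then show ?thesis
    proof cases
      case a
      have "\<not> b \<le> snd p"
      proof
        assume "b \<le> snd p"
        then have "b \<in> {fst p..snd p}" using a ab by auto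
        then show False using bA AU a unfolding U_def by auto
      qed
      moreover have "{a..snd p} \<subseteq> A" using a AU U_sub_P[of p P a "snd p" Q] by auto
      ultimately have "snd p \<in> T" unfolding T_def using a by auto
      then show ?thesis by auto
    next
      case b
      then have "b \<in> A" using ab AU U_mem_Q[of i Q b P] by auto
      then show ?thesis using bA by auto
    qed
  qed
  define r where "r = Max T"
  have rT: "r \<in> T" unfolding r_def using finT \<open>T \<noteq> {}\<close> by (rule Max_in)
  have rmax: "j \<le> r" if "j \<in> T" for j unfolding r_def using finT that by (rule Max_ge)
  have ar: "a \<le> r" "r < b" "{a..r} \<subseteq> A" using rT unfolding T_def by auto
  have rA: "r \<in> A" using ar by auto
  have "\<not> (\<exists>y>r. {r..y} \<subseteq> A)"
  proof
    assume "\<exists>y>r. {r..y} \<subseteq> A"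
    then obtain y where ry: "r < y" "{r..y} \<subseteq> A" by blast
    define M where "M = {i \<in> fst ` P \<union> Q. r < i}"
    have finM: "finite M" unfolding M_def using fin by auto
    define m where "m = Min (insert y M)"
    have rm: "r < m" unfolding m_def using finM ry by (auto simp: M_def)
    have my: "m \<le> y" unfolding m_def using finM by auto
    have mM: "m \<le> i" if "i \<in> M" for i unfolding m_def using finM that by auto
    obtain z where z: "r < z" "z < m" using rm dense by blast
    have "z \<in> {r..y}" using z my by auto
    then have zA: "z \<in> A" using ry by auto
    from zA AU consider (a) p where "p \<in> P" "z \<in> {fst p..snd p}" | (b) i where "i \<in> Q" "z \<in> {i..}"
      unfolding U_def by blast
    then show False
    proof cases
      case a
      show False
      proof (cases "r < fst p")
        case True
        then have "fst p \<in> M" unfolding M_def using a by auto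
        then show False using mM[of "fst p"] a z by auto
      next
        case False
        then have fr: "fst p \<le> r" by auto
        show False
        proof (cases "b \<le> snd p")
          case True
          then have "b \<in> A" using AU a fr ar U_mem_P[of p P b Q] by auto
          then show False using bA by auto
        next
          case False
          have "{a..snd p} \<subseteq> A"
          proof
            fix w assume w: "w \<in> {a..snd p}"
            show "w \<in> A"
            proof (cases "w \<le> r")
              case True then show ?thesis using ar w by auto
            next
              case False
              then have "w \<in> {fst p..snd p}" using fr w by auto
              then show ?thesis using AU a U_mem_P[of p P w Q] by auto
            qed
          qed
          then have "snd p \<in> T" unfolding T_def using a False ar z by auto
          then show False using rmax[of "snd p"] a z by auto
        qed
      qed
    next
      case b
      show False
      proof (cases "r < i")
        case True
        then have "i \<in> M" unfolding M_def using b by auto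
        then show False using mM[of i] b z by auto
      next
        case False
        then have "b \<in> A" using AU b ar U_mem_Q[of i Q b P] by auto
        then show False using bA by auto
      qed
    qed
  qed
  then have "r \<in> rend A" unfolding rend_def using rA by auto
  then show ?thesis using ar by auto
qed

lemma lemG':
  fixes A :: "'a::dense_linorder set"
  assumes AU: "A = U P Q" and fin: "finite P" "finite Q" and xA: "x \<in> A"
  shows "\<exists>l\<in>lend A. l \<le> x \<and> {l..x} \<subseteq> A"
proof -
  define T where "T = {i \<in> fst ` P \<union> Q. i \<le> x \<and> {i..x} \<subseteq> A}"
  have finT: "finite T" unfolding T_def using fin by auto
  have "T \<noteq> {}"
  proof -
    from xA AU consider (a) p where "p \<in> P" "x \<in> {fst p..snd p}" | (b) i where "i \<in> Q" "x \<in> {i..}"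
      unfolding U_def by blast
    then show ?thesis
    proof cases
      case a
      have "{fst p..x} \<subseteq> A" using a AU U_sub_P[of p P "fst p" x Q] by auto
      then have "fst p \<in> T" unfolding T_def using a by auto
      then show ?thesis by auto
    next
      case b
      have "{i..x} \<subseteq> A" using b AU U_sub_Q[of i Q i x P] by auto
      then have "i \<in> T" unfolding T_def using b by auto
      then show ?thesis by auto
    qed
  qed
  define l where "l = Min T"
  have lT: "l \<in> T" unfolding l_def using finT \<open>T \<noteq> {}\<close> by (rule Min_in)
  have lmin: "l \<le> j" if "j \<in> T" for j unfolding l_def using finT that by (rule Min_le)
  have lx: "l \<le> x" "{l..x} \<subseteq> A" using lT unfolding T_def by auto
  have lA: "l \<in> A" using lx by auto
  have "\<not> (\<exists>y<l. {y..l} \<subseteq> A)"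
  proof
    assume "\<exists>y<l. {y..l} \<subseteq> A"
    then obtain y where yl: "y < l" "{y..l} \<subseteq> A" by blast
    define M where "M = {j \<in> snd ` P. j < l}"
    have finM: "finite M" unfolding M_def using fin by auto
    define m where "m = Max (insert y M)"
    have ml: "m < l" unfolding m_def using finM yl by (auto simp: M_def)
    have ym: "y \<le> m" unfolding m_def using finM by auto
    have mM: "j \<le> m" if "j \<in> M" for j unfolding m_def using finM that by auto
    obtain z where z: "m < z" "z < l" using ml dense by blast
    have "z \<in> {y..l}" using z ym by auto
    then have zA: "z \<in> A" using yl by auto
    from zA AU consider (a) p where "p \<in> P" "z \<in> {fst p..snd p}" | (b) i where "i \<in> Q" "z \<in> {i..}"
      unfolding U_def by blast
    then show False
    proof cases
      case a
      show False
      proof (cases "snd p < l")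
        case True
        then have "snd p \<in> M" unfolding M_def using a by auto
        then show False using mM[of "snd p"] a z by auto
      next
        case False
        then have ls: "l \<le> snd p" by auto
        have "{fst p..x} \<subseteq> A"
        proof
          fix w assume w: "w \<in> {fst p..x}"
          show "w \<in> A"
          proof (cases "l \<le> w")
            case True then show ?thesis using lx w by auto
          next
            case False
            then have "w \<in> {fst p..snd p}" using ls w by auto
            then show ?thesis using AU a U_mem_P[of p P w Q] by auto
          qed
        qed
        then have "fst p \<in> T" unfolding T_def using a z lx by auto
        then show False using lmin[of "fst p"] a z by auto
      qed
    next
      case b
      have "{i..x} \<subseteq> A" using b AU U_sub_Q[of i Q i x P] by auto
      then have "i \<in> T" unfolding T_def using b z lx by auto
      then show False using lmin[of i] b z by auto
    qed
  qed
  then have "l \<in> lend A" unfolding lend_def using lA by auto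
  then show ?thesis using lx by auto
qed

lemma D2:
  fixes A :: "'a::{dense_linorder,order_bot,no_top} set"
  assumes "A \<in> Lset"
  shows "finite (lend A)" "finite (rend A)" "dec (lend A) (rend A) = A"
proof -
  obtain P Q where PQ: "finite P" "finite Q" "A = U P Q" using Lset_rep[OF assms] by blast
  show "finite (lend A)" using lend_sub[OF PQ(3)] PQ by (auto intro: finite_subset)
  show "finite (rend A)" using rend_sub[OF PQ(3)] PQ by (auto intro: finite_subset)
  show "dec (lend A) (rend A) = A"
  proof
    show "dec (lend A) (rend A) \<subseteq> A"
    proof
      fix x assume "x \<in> dec (lend A) (rend A)"
      then obtain l where l: "l \<in> lend A" "l \<le> x" "\<not> (\<exists>r\<in>rend A. l \<le> r \<and> r < x)"
        unfolding dec_def by blast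
      have "l \<in> A" using l unfolding lend_def by auto
      show "x \<in> A"
      proof (rule ccontr)
        assume "x \<notin> A"
        from lemG[OF PQ(3) PQ(1) PQ(2) \<open>l \<in> A\<close> l(2) this] l(3) show False by blast
      qed
    qed
  next
    show "A \<subseteq> dec (lend A) (rend A)"
    proof
      fix x assume "x \<in> A"
      from lemG'[OF PQ(3) PQ(1) PQ(2) this] obtain l where
        l: "l \<in> lend A" "l \<le> x" "{l..x} \<subseteq> A" by blast
      have "\<not> (\<exists>r\<in>rend A. l \<le> r \<and> r < x)"
      proof
        assume "\<exists>r\<in>rend A. l \<le> r \<and> r < x"
        then obtain r where r: "r \<in> rend A" "l \<le> r" "r < x" by blast
        have "{r..x} \<subseteq> {l..x}" using r by auto
        then have "{r..x} \<subseteq> A" using l(3) by (rule subset_trans)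
        then show False using r unfolding rend_def by auto
      qed
      then show "x \<in> dec (lend A) (rend A)" unfolding dec_def using l by auto
    qed
  qed
qed

lemma D1:
  fixes L R :: "'a::linorder set"
  assumes "finite L" "finite R"
  shows "dec L R \<in> Lset"
proof -
  define J where "J l = (if \<exists>r\<in>R. l \<le> r then {l..Min {r\<in>R. l \<le> r}} else {l..})" for l
  have ci: "closed_interval (J l)" for l
  proof (cases "\<exists>r\<in>R. l \<le> r")
    case True
    then have "l \<le> Min {r\<in>R. l \<le> r}" using assms by (auto intro: Min_ge_iff[THEN iffD2])
    then show ?thesis using True unfolding J_def closed_interval_def by auto
  next
    case False
    then show ?thesis unfolding J_def closed_interval_def by auto
  qed
  have eq: "(l \<le> x \<and> \<not> (\<exists>r\<in>R. l \<le> r \<and> r < x)) \<longleftrightarrow> x \<in> J l" for l x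
  proof (cases "\<exists>r\<in>R. l \<le> r")
    case True
    define S where "S = {r\<in>R. l \<le> r}"
    have finS: "finite S" "S \<noteq> {}" unfolding S_def using assms True by auto
    have mS: "Min S \<in> S" using finS by (rule Min_in)
    have mle: "Min S \<le> r" if "r \<in> S" for r using finS(1) that by (rule Min_le)
    have J: "J l = {l..Min S}" unfolding J_def S_def using True by auto
    show ?thesis
    proof
      assume h: "l \<le> x \<and> \<not> (\<exists>r\<in>R. l \<le> r \<and> r < x)"
      then have "\<not> Min S < x" using mS unfolding S_def by auto
      then show "x \<in> J l" using h J by auto
    next
      assume "x \<in> J l"
      then have "l \<le> x" "x \<le> Min S" using J by auto
      moreover have "\<not> (\<exists>r\<in>R. l \<le> r \<and> r < x)"
        using mle \<open>x \<le> Min S\<close> unfolding S_def by force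
      ultimately show "l \<le> x \<and> \<not> (\<exists>r\<in>R. l \<le> r \<and> r < x)" by auto
    qed
  next
    case False
    then show ?thesis unfolding J_def by auto
  qed
  have "dec L R = \<Union>(J ` L)" unfolding dec_def using eq by blast
  then show ?thesis unfolding Lset_def using assms ci by blast
qed



definition dlt :: "(nat \<Rightarrow> 'a::linorder set) \<Rightarrow> nat \<Rightarrow> 'a set" where
  "dlt \<tau> n = dec (\<tau> (2*n)) (\<tau> (Suc (2*n)))"

definition IsPt :: "nat \<Rightarrow> wtm fm" where
  "IsPt p = Conj (Neg (Eq (WVar p) WBot)) (Eq (WMin (WVar p)) (WVar p))"
definition ExPt :: "nat \<Rightarrow> wtm fm \<Rightarrow> wtm fm" where
  "ExPt p \<phi> = Ex p (Conj (IsPt p) \<phi>)"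
definition Le :: "nat \<Rightarrow> nat \<Rightarrow> wtm fm" where
  "Le p q = Eq (WMin (WUn (WVar p) (WVar q))) (WVar p)"
definition Lt :: "nat \<Rightarrow> nat \<Rightarrow> wtm fm" where
  "Lt p q = Conj (Le p q) (Neg (Eq (WVar p) (WVar q)))"
definition InS :: "nat \<Rightarrow> wtm \<Rightarrow> wtm fm" where
  "InS p s = Eq (WInt (WVar p) s) (WVar p)"
definition FF :: "wtm fm" where
  "FF = Neg (Eq WBot WBot)"
definition Iff :: "wtm fm \<Rightarrow> wtm fm \<Rightarrow> wtm fm" where
  "Iff a c = Disj (Conj a c) (Conj (Neg a) (Neg c))"

lemma min_set_pair: "min_set {x::'a::linorder, y} = {min x y}"
  unfolding min_set_def
proof (cases "x \<le> y")
  case True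
  then have "(LEAST z. z \<in> {x, y}) = x" by (intro Least_equality) auto
  then show "(if \<exists>m\<in>{x, y}. \<forall>z\<in>{x, y}. m \<le> z then {LEAST z. z \<in> {x, y}} else {}) = {min x y}"
    using True by auto
next
  case False
  then have "(LEAST z. z \<in> {x, y}) = y" by (intro Least_equality) auto
  then show "(if \<exists>m\<in>{x, y}. \<forall>z\<in>{x, y}. m \<le> z then {LEAST z. z \<in> {x, y}} else {}) = {min x y}"
    using False by auto
qed

lemma min_set_single: "min_set {x::'a::linorder} = {x}"
  using min_set_pair[of x x] by simp

lemma min_set_fix: "min_set A = A \<Longrightarrow> A \<noteq> {} \<Longrightarrow> \<exists>x. A = {x}"
  unfolding min_set_def by (auto split: if_splits)

lemma Wsat_IsPt: "Wsat (\<tau>::nat \<Rightarrow> 'a::{linorder,order_bot} set) (IsPt p) \<longleftrightarrow> (\<exists>x. \<tau> p = {x})"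
proof
  assume "Wsat \<tau> (IsPt p)"
  then have h1: "\<tau> p \<noteq> {}" and h2: "min_set (\<tau> p) = \<tau> p" by (auto simp: IsPt_def)
  show "\<exists>x. \<tau> p = {x}" by (rule min_set_fix[OF h2 h1])
next
  assume "\<exists>x. \<tau> p = {x}"
  then obtain x where hx: "\<tau> p = {x}" by blast
  show "Wsat \<tau> (IsPt p)" by (simp add: IsPt_def hx min_set_single)
qed

lemma Wsat_ExPt: "Wsat (\<tau>::nat \<Rightarrow> 'a::{linorder,order_bot} set) (ExPt p \<phi>) \<longleftrightarrow> (\<exists>u. Wsat (\<tau>(p := {u})) \<phi>)"
  by (auto simp: ExPt_def Wsat_IsPt Wset_def)

lemma Wsat_Le: "\<tau> p = {x} \<Longrightarrow> \<tau> q = {y} \<Longrightarrow> Wsat (\<tau>::nat \<Rightarrow> 'a::{linorder,order_bot} set) (Le p q) \<longleftrightarrow> x \<le> y"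
  by (auto simp: Le_def min_set_pair min_def)

lemma Wsat_Lt: "\<tau> p = {x} \<Longrightarrow> \<tau> q = {y} \<Longrightarrow> Wsat (\<tau>::nat \<Rightarrow> 'a::{linorder,order_bot} set) (Lt p q) \<longleftrightarrow> x < y"
  by (auto simp: Lt_def Wsat_Le)

lemma Wsat_InS: "\<tau> p = {x} \<Longrightarrow> Wsat (\<tau>::nat \<Rightarrow> 'a::{linorder,order_bot} set) (InS p s) \<longleftrightarrow> x \<in> Weval \<tau> s"
  by (auto simp: InS_def)

lemma Wsat_FF: "\<not> Wsat \<tau> FF" by (simp add: FF_def)
lemma Wsat_Iff: "Wsat \<tau> (Iff a c) \<longleftrightarrow> (Wsat \<tau> a \<longleftrightarrow> Wsat \<tau> c)" by (auto simp: Iff_def)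

lemma mem_min_set: "x \<in> min_set A \<longleftrightarrow> x \<in> A \<and> (\<forall>y\<in>A. x \<le> y)"
proof -
  { assume "x \<in> A" "\<forall>y\<in>A. x \<le> y"
    then have "(LEAST z. z \<in> A) = x" by (intro Least_equality) auto }
  moreover
  { fix m assume "m \<in> A" "\<forall>z\<in>A. m \<le> z"
    then have "(LEAST z. z \<in> A) = m" by (intro Least_equality) auto }
  ultimately show ?thesis unfolding min_set_def by (auto split: if_splits)
qed

lemma mem_max_set: "x \<in> max_set A \<longleftrightarrow> x \<in> A \<and> (\<forall>y\<in>A. y \<le> x)"
proof -
  { assume "x \<in> A" "\<forall>y\<in>A. y \<le> x"
    then have "(GREATEST z. z \<in> A) = x" by (intro Greatest_equality) auto }
  moreover
  { fix m assume "m \<in> A" "\<forall>z\<in>A. z \<le> m"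
    then have "(GREATEST z. z \<in> A) = m" by (intro Greatest_equality) auto }
  ultimately show ?thesis unfolding max_set_def by (auto split: if_splits)
qed

lemma mem_lend: "x \<in> lend A \<longleftrightarrow> x \<in> A \<and> \<not> (\<exists>y<x. \<forall>w. y \<le> w \<and> w \<le> x \<longrightarrow> w \<in> A)"
  unfolding lend_def by (auto simp: subset_iff)

lemma mem_rend: "x \<in> rend A \<longleftrightarrow> x \<in> A \<and> \<not> (\<exists>y>x. \<forall>w. x \<le> w \<and> w \<le> y \<longrightarrow> w \<in> A)"
  unfolding rend_def by (auto simp: subset_iff)

primrec lmx :: "ltm \<Rightarrow> nat" where
  "lmx (LVar n) = Suc n"
| "lmx (LUn s t) = max (lmx s) (lmx t)"
| "lmx (LInt s t) = max (lmx s) (lmx t)"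
| "lmx LBot = 0"
| "lmx LZero = 0"
| "lmx (LMin t) = lmx t"
| "lmx (LMax t) = lmx t"
| "lmx (LL t) = lmx t"
| "lmx (LR t) = lmx t"

primrec fmx :: "ltm fm \<Rightarrow> nat" where
  "fmx (Eq s t) = max (lmx s) (lmx t)"
| "fmx (Neg \<phi>) = fmx \<phi>"
| "fmx (Conj \<phi> \<psi>) = max (fmx \<phi>) (fmx \<psi>)"
| "fmx (Disj \<phi> \<psi>) = max (fmx \<phi>) (fmx \<psi>)"
| "fmx (Ex x \<phi>) = max (Suc x) (fmx \<phi>)"
| "fmx (All x \<phi>) = max (Suc x) (fmx \<phi>)"

lemma Leval_agree: "(\<forall>n<lmx t. \<sigma> n = \<sigma>' n) \<Longrightarrow> Leval \<sigma> t = Leval \<sigma>' t"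
  by (induction t) auto

lemma Leval_dlt_upd: "2 * lmx t \<le> k \<Longrightarrow> Leval (dlt (\<tau>(k := v))) t = Leval (dlt \<tau>) t"
  by (rule Leval_agree) (auto simp: dlt_def)

lemma aux_R: "(\<forall>y>x. \<exists>w\<le>y. (x::'a::linorder) \<le> w \<and> w \<notin> M) = (\<forall>y>x. \<exists>w\<ge>x. w \<le> y \<and> w \<notin> M)"
  by blast

lemma mem_dec: "x \<in> dec L R \<longleftrightarrow> (\<exists>l. l \<in> L \<and> l \<le> x \<and> (\<forall>r\<ge>l. r \<in> R \<longrightarrow> \<not> r < x))"
  unfolding dec_def by auto

primrec mem :: "nat \<Rightarrow> ltm \<Rightarrow> nat \<Rightarrow> wtm fm" where
  "mem b (LVar n) p = ExPt b (Conj (InS b (WVar (2*n))) (Conj (Le b p)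
     (Neg (ExPt (Suc b) (Conj (InS (Suc b) (WVar (Suc (2*n)))) (Conj (Le b (Suc b)) (Lt (Suc b) p)))))))"
| "mem b (LUn s t) p = Disj (mem b s p) (mem b t p)"
| "mem b (LInt s t) p = Conj (mem b s p) (mem b t p)"
| "mem b LBot p = FF"
| "mem b LZero p = Eq (WVar p) WZero"
| "mem b (LMin t) p = Conj (mem b t p) (Neg (ExPt b (Conj (mem (Suc b) t b) (Lt b p))))"
| "mem b (LMax t) p = Conj (mem b t p) (Neg (ExPt b (Conj (mem (Suc b) t b) (Lt p b))))"
| "mem b (LL t) p = Conj (mem b t p) (Neg (ExPt b (Conj (Lt b p) (Neg (ExPt (Suc b)
     (Conj (Le b (Suc b)) (Conj (Le (Suc b) p) (Neg (mem (Suc (Suc b)) t (Suc b))))))))))"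
| "mem b (LR t) p = Conj (mem b t p) (Neg (ExPt b (Conj (Lt p b) (Neg (ExPt (Suc b)
     (Conj (Le p (Suc b)) (Conj (Le (Suc b) b) (Neg (mem (Suc (Suc b)) t (Suc b))))))))))"

lemma mem_correct:
  fixes \<tau> :: "nat \<Rightarrow> 'a::{linorder,order_bot} set"
  assumes "2 * lmx t \<le> b" "p < b" "\<tau> p = {x}"
  shows "Wsat \<tau> (mem b t p) \<longleftrightarrow> x \<in> Leval (dlt \<tau>) t"
  using assms
proof (induction t arbitrary: b p \<tau> x)
  case (LVar n)
  then show ?case
    by (simp add: Wsat_ExPt Wsat_InS Wsat_Le Wsat_Lt dlt_def mem_dec)
next
  case (LUn s t) then show ?case by simp
next
  case (LInt s t) then show ?case by simp
next
  case LBot then show ?case by (simp add: Wsat_FF)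
next
  case LZero then show ?case by auto
next
  case (LMin t)
  have e: "Leval (dlt (\<tau>(b := {y}))) t = Leval (dlt \<tau>) t" for y
    using LMin.prems by (intro Leval_dlt_upd) simp
  have "Wsat (\<tau>(b := {y})) (mem (Suc b) t b) \<longleftrightarrow> y \<in> Leval (dlt \<tau>) t" for y
  proof -
    have "Wsat (\<tau>(b := {y})) (mem (Suc b) t b) \<longleftrightarrow> y \<in> Leval (dlt (\<tau>(b := {y}))) t"
      by (rule LMin.IH) (use LMin.prems in auto)
    then show ?thesis using e by simp
  qed
  then show ?case using LMin.IH[of b p \<tau> x] LMin.prems
    by (auto simp: Wsat_ExPt Wsat_Lt mem_min_set not_less)
next
  case (LMax t)
  have e: "Leval (dlt (\<tau>(b := {y}))) t = Leval (dlt \<tau>) t" for y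
    using LMax.prems by (intro Leval_dlt_upd) simp
  have "Wsat (\<tau>(b := {y})) (mem (Suc b) t b) \<longleftrightarrow> y \<in> Leval (dlt \<tau>) t" for y
  proof -
    have "Wsat (\<tau>(b := {y})) (mem (Suc b) t b) \<longleftrightarrow> y \<in> Leval (dlt (\<tau>(b := {y}))) t"
      by (rule LMax.IH) (use LMax.prems in auto)
    then show ?thesis using e by simp
  qed
  then show ?case using LMax.IH[of b p \<tau> x] LMax.prems
    by (auto simp: Wsat_ExPt Wsat_Lt mem_max_set not_less)
next
  case (LL t)
  have e: "Leval (dlt (\<tau>(b := {y}, Suc b := {w}))) t = Leval (dlt \<tau>) t" for y w
    using LL.prems by (simp add: Leval_dlt_upd)
  have "Wsat (\<tau>(b := {y}, Suc b := {w})) (mem (Suc (Suc b)) t (Suc b)) \<longleftrightarrow> w \<in> Leval (dlt \<tau>) t" for y w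
  proof -
    have "Wsat (\<tau>(b := {y}, Suc b := {w})) (mem (Suc (Suc b)) t (Suc b)) \<longleftrightarrow> w \<in> Leval (dlt (\<tau>(b := {y}, Suc b := {w}))) t"
      by (rule LL.IH) (use LL.prems in auto)
    then show ?thesis using e by simp
  qed
  moreover have "Wsat \<tau> (mem b t p) \<longleftrightarrow> x \<in> Leval (dlt \<tau>) t"
    by (rule LL.IH) (use LL.prems in auto)
  ultimately show ?case using LL.prems
    by (simp add: Wsat_ExPt Wsat_Lt Wsat_Le mem_lend) blast
next
  case (LR t)
  have e: "Leval (dlt (\<tau>(b := {y}, Suc b := {w}))) t = Leval (dlt \<tau>) t" for y w
    using LR.prems by (simp add: Leval_dlt_upd)
  have "Wsat (\<tau>(b := {y}, Suc b := {w})) (mem (Suc (Suc b)) t (Suc b)) \<longleftrightarrow> w \<in> Leval (dlt \<tau>) t" for y w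
  proof -
    have "Wsat (\<tau>(b := {y}, Suc b := {w})) (mem (Suc (Suc b)) t (Suc b)) \<longleftrightarrow> w \<in> Leval (dlt (\<tau>(b := {y}, Suc b := {w}))) t"
      by (rule LR.IH) (use LR.prems in auto)
    then show ?thesis using e by simp
  qed
  note h1 = this
  have h2: "Wsat \<tau> (mem b t p) \<longleftrightarrow> x \<in> Leval (dlt \<tau>) t"
    by (rule LR.IH) (use LR.prems in auto)
  have h3: "\<tau> p = {x}" "p \<noteq> b" "p \<noteq> Suc b" "b \<noteq> p" "Suc b \<noteq> p" using LR.prems by auto
  show ?case
    by (simp add: Wsat_ExPt Wsat_Lt Wsat_Le mem_rend h1 h2 h3 aux_R)
qed


primrec tr :: "nat \<Rightarrow> ltm fm \<Rightarrow> wtm fm" where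
  "tr b (Eq s t) = Neg (ExPt b (Neg (Iff (mem (Suc b) s b) (mem (Suc b) t b))))"
| "tr b (Neg \<phi>) = Neg (tr b \<phi>)"
| "tr b (Conj \<phi> \<psi>) = Conj (tr b \<phi>) (tr b \<psi>)"
| "tr b (Disj \<phi> \<psi>) = Disj (tr b \<phi>) (tr b \<psi>)"
| "tr b (Ex x \<phi>) = Ex (2*x) (Ex (Suc (2*x)) (tr b \<phi>))"
| "tr b (All x \<phi>) = All (2*x) (All (Suc (2*x)) (tr b \<phi>))"

lemma dlt_upd2: "dlt (\<tau>(2*x := L, Suc (2*x) := R)) = (dlt \<tau>)(x := dec L R)"
  by (auto simp: dlt_def fun_eq_iff)

lemma Lset_iff:
  "(A::'a::{dense_linorder,order_bot,no_top} set) \<in> Lset \<longleftrightarrow> (\<exists>L R. finite L \<and> finite R \<and> A = dec L R)"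
proof
  assume "A \<in> Lset"
  then show "\<exists>L R. finite L \<and> finite R \<and> A = dec L R"
    using D2[of A] by metis
next
  assume "\<exists>L R. finite L \<and> finite R \<and> A = dec L R"
  then show "A \<in> Lset" using D1 by blast
qed

lemma tr_correct:
  fixes \<tau> :: "nat \<Rightarrow> 'a::{dense_linorder,order_bot,no_top} set"
  assumes "2 * fmx \<phi> \<le> b"
  shows "Wsat \<tau> (tr b \<phi>) \<longleftrightarrow> Lsat (dlt \<tau>) \<phi>"
  using assms
proof (induction \<phi> arbitrary: \<tau>)
  case (Eq s t)
  have hs: "Wsat (\<tau>(b := {u})) (mem (Suc b) s b) \<longleftrightarrow> u \<in> Leval (dlt \<tau>) s" for u
  proof -
    have "Wsat (\<tau>(b := {u})) (mem (Suc b) s b) \<longleftrightarrow> u \<in> Leval (dlt (\<tau>(b := {u}))) s"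
      by (rule mem_correct) (use Eq in auto)
    also have "Leval (dlt (\<tau>(b := {u}))) s = Leval (dlt \<tau>) s"
      by (rule Leval_dlt_upd) (use Eq in auto)
    finally show ?thesis .
  qed
  have ht: "Wsat (\<tau>(b := {u})) (mem (Suc b) t b) \<longleftrightarrow> u \<in> Leval (dlt \<tau>) t" for u
  proof -
    have "Wsat (\<tau>(b := {u})) (mem (Suc b) t b) \<longleftrightarrow> u \<in> Leval (dlt (\<tau>(b := {u}))) t"
      by (rule mem_correct) (use Eq in auto)
    also have "Leval (dlt (\<tau>(b := {u}))) t = Leval (dlt \<tau>) t"
      by (rule Leval_dlt_upd) (use Eq in auto)
    finally show ?thesis .
  qed
  have "Wsat \<tau> (tr b (Eq s t)) \<longleftrightarrow> (\<forall>u. u \<in> Leval (dlt \<tau>) s \<longleftrightarrow> u \<in> Leval (dlt \<tau>) t)"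
    by (simp add: Wsat_ExPt Wsat_Iff hs ht)
  also have "\<dots> \<longleftrightarrow> Lsat (dlt \<tau>) (Eq s t)" by (simp add: set_eq_iff)
  finally show ?case .
next
  case (Neg \<phi>) then show ?case by simp
next
  case (Conj \<phi> \<psi>) then show ?case by simp
next
  case (Disj \<phi> \<psi>) then show ?case by simp
next
  case (Ex x \<phi>)
  have ih: "Wsat (\<tau>(2*x := L, Suc (2*x) := R)) (tr b \<phi>) \<longleftrightarrow> Lsat ((dlt \<tau>)(x := dec L R)) \<phi>" for L R
  proof -
    have b: "2 * fmx \<phi> \<le> b" using Ex.prems by (simp add: max_def split: if_splits)
    show ?thesis using Ex.IH[OF b, of "\<tau>(2*x := L, Suc (2*x) := R)"] unfolding dlt_upd2 .
  qed
  have "Wsat \<tau> (tr b (Ex x \<phi>)) \<longleftrightarrow> (\<exists>L R. finite L \<and> finite R \<and> Lsat ((dlt \<tau>)(x := dec L R)) \<phi>)"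
    by (simp add: Wset_def ih)
  also have "\<dots> \<longleftrightarrow> (\<exists>A\<in>Lset. Lsat ((dlt \<tau>)(x := A)) \<phi>)"
  proof
    assume "\<exists>L R. finite L \<and> finite R \<and> Lsat ((dlt \<tau>)(x := dec L R)) \<phi>"
    then obtain L R where "finite L" "finite R" "Lsat ((dlt \<tau>)(x := dec L R)) \<phi>" by blast
    then show "\<exists>A\<in>Lset. Lsat ((dlt \<tau>)(x := A)) \<phi>" using D1 by blast
  next
    assume "\<exists>A\<in>Lset. Lsat ((dlt \<tau>)(x := A)) \<phi>"
    then obtain A where A: "A \<in> Lset" "Lsat ((dlt \<tau>)(x := A)) \<phi>" by blast
    then have "Lsat ((dlt \<tau>)(x := dec (lend A) (rend A))) \<phi>" using D2(3)[OF A(1)] by simp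
    then show "\<exists>L R. finite L \<and> finite R \<and> Lsat ((dlt \<tau>)(x := dec L R)) \<phi>"
      using D2(1,2)[OF A(1)] by blast
  qed
  finally show ?case by simp
next
  case (All x \<phi>)
  have ih: "Wsat (\<tau>(2*x := L, Suc (2*x) := R)) (tr b \<phi>) \<longleftrightarrow> Lsat ((dlt \<tau>)(x := dec L R)) \<phi>" for L R
  proof -
    have b: "2 * fmx \<phi> \<le> b" using All.prems by (simp add: max_def split: if_splits)
    show ?thesis using All.IH[OF b, of "\<tau>(2*x := L, Suc (2*x) := R)"] unfolding dlt_upd2 .
  qed
  have "Wsat \<tau> (tr b (All x \<phi>)) \<longleftrightarrow> (\<forall>L R. finite L \<longrightarrow> finite R \<longrightarrow> Lsat ((dlt \<tau>)(x := dec L R)) \<phi>)"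
    by (simp add: Wset_def ih)
  also have "\<dots> \<longleftrightarrow> (\<forall>A\<in>Lset. Lsat ((dlt \<tau>)(x := A)) \<phi>)"
  proof
    assume h: "\<forall>L R. finite L \<longrightarrow> finite R \<longrightarrow> Lsat ((dlt \<tau>)(x := dec L R)) \<phi>"
    show "\<forall>A\<in>Lset. Lsat ((dlt \<tau>)(x := A)) \<phi>"
    proof
      fix A :: "'a set" assume A: "A \<in> Lset"
      have "Lsat ((dlt \<tau>)(x := dec (lend A) (rend A))) \<phi>" using h D2(1,2)[OF A] by blast
      then show "Lsat ((dlt \<tau>)(x := A)) \<phi>" using D2(3)[OF A] by simp
    qed
  next
    assume "\<forall>A\<in>Lset. Lsat ((dlt \<tau>)(x := A)) \<phi>"
    then show "\<forall>L R. finite L \<longrightarrow> finite R \<longrightarrow> Lsat ((dlt \<tau>)(x := dec L R)) \<phi>"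
      using D1 by blast
  qed
  finally show ?case by simp
qed

lemma dlt_endpoint:
  fixes \<sigma> :: "nat \<Rightarrow> 'a::{dense_linorder,order_bot,no_top} set"
  assumes "\<forall>n. \<sigma> n \<in> Lset"
  shows "dlt (endpoint_asg \<sigma>) = \<sigma>"
proof
  fix n
  have "dlt (endpoint_asg \<sigma>) n = dec (lend (\<sigma> n)) (rend (\<sigma> n))"
    by (simp add: dlt_def endpoint_asg_def)
  also have "\<dots> = \<sigma> n" using D2(3) assms by blast
  finally show "dlt (endpoint_asg \<sigma>) n = \<sigma> n" .
qed

theorem corollary6p5:
  fixes \<phi> :: "ltm fm"
  shows "\<exists>\<psi> :: wtm fm. \<forall>\<sigma> :: nat \<Rightarrow> 'a::{dense_linorder,order_bot,no_top} set.
           (\<forall>n. \<sigma> n \<in> Lset) \<longrightarrow> (Lsat \<sigma> \<phi> \<longleftrightarrow> Wsat (endpoint_asg \<sigma>) \<psi>)"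
proof (intro exI allI impI)
  fix \<sigma> :: "nat \<Rightarrow> 'a::{dense_linorder,order_bot,no_top} set"
  assume h: "\<forall>n. \<sigma> n \<in> Lset"
  have "Wsat (endpoint_asg \<sigma>) (tr (2 * fmx \<phi>) \<phi>) \<longleftrightarrow> Lsat (dlt (endpoint_asg \<sigma>)) \<phi>"
    by (rule tr_correct) simp
  then show "Lsat \<sigma> \<phi> \<longleftrightarrow> Wsat (endpoint_asg \<sigma>) (tr (2 * fmx \<phi>) \<phi>)"
    using dlt_endpoint[OF h] by simp
qed

end
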